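(* Let $\varphi\colon[\mathbb{F}_2,\mathbb{F}_2]\to\mathbb{Z}$ be the homomorphism defined below and $G_1=\ker\varphi$. Suppose $g\in[\mathbb{F}_2,\mathbb{F}_2]$ satisfies $\varphi(g)=0$ and $g=ab$ with $a,b\in\mathbb{F}_2$ conjugate in $\mathbb{F}_2$. Then $a,b\in G_1$.
   Context: $\mathbb{F}_2$ is the free group on $x,y$. Let $\tilde K$ be the graph with vertex set $\mathbb{Z}^2$ and oriented edges $x^iy^jX$ from $(i,j)$ to $(i+1,j)$ and $x^iy^jY$ from $(i,j)$ to $(i,j+1)$ (the universal abelian cover of the wedge of two circles). A $1$-chain is written $\alpha=P_\alpha(x,y)X+Q_\alpha(x,y)Y$ with $P_\alpha,Q_\alpha$ integer Laurent polynomials (the coefficient of $x^iy^j$ in $P_\alpha$ is the coefficient of the edge $x^iy^jX$, similarly for $Q_\alpha$). For $g\in[\mathbb{F}_2,\mathbb{F}_2]$ written as a word in $x^{\pm1},y^{\pm1}$, the associated cycle $\alpha_g$ is the $1$-cycle traced by the lattice path starting at $(0,0)$ in which a letter $x$ (resp. $x^{-1}$, $y$, $y^{-1}$) moves by $(1,0)$ (resp. $(-1,0)$, $(0,1)$, $(0,-1)$) along the corresponding edge, each edge counted with sign $+1$ if traversed in its orientation and $-1$ otherwise; its homology class depends only on $g$. Let $f_\alpha(y)=P_\alpha(1,y)$. Define $\varphi(g)=f_{\alpha_g}'(1)$; this is a homomorphism $[\mathbb{F}_2,\mathbb{F}_2]\to\mathbb{Z}$. *)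

theory Defs
  imports "HOL-Analysis.Derivative" "HOL-Algebra.Solvable_Groups"
begin

datatype gen = GX | GY

text \<open>A letter is a generator with a sign: (GX, True) = x, (GX, False) = x^-1, etc.\<close>
type_synonym letter = "gen \<times> bool"

definition inv_letter :: "letter \<Rightarrow> letter" where
  "inv_letter l = (fst l, \<not> snd l)"

fun reduced :: "letter list \<Rightarrow> bool" where
  "reduced [] = True"
| "reduced [l] = True"
| "reduced (l # m # w) = (m \<noteq> inv_letter l \<and> reduced (m # w))"

fun push :: "letter \<Rightarrow> letter list \<Rightarrow> letter list" where
  "push l [] = [l]"
| "push l (m # w) = (if m = inv_letter l then w else l # m # w)"

definition red :: "letter list \<Rightarrow> letter list" where
  "red w = foldr push w []"

definition F2 :: "letter list monoid" where
  "F2 = \<lparr> carrier = {w. reduced w}, mult = (\<lambda>a b. red (a @ b)), one = [] \<rparr>"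

definition comm_F2 :: "letter list set" where
  "comm_F2 = derived F2 (carrier F2)"

definition conjugate_F2 :: "letter list \<Rightarrow> letter list \<Rightarrow> bool" where
  "conjugate_F2 a b \<longleftrightarrow> (\<exists>c \<in> carrier F2. b = c \<otimes>\<^bsub>F2\<^esub> a \<otimes>\<^bsub>F2\<^esub> inv\<^bsub>F2\<^esub> c)"

text \<open>Coefficients of the X-edges of the lattice path of a word starting at point p:
  chainX p w (i,j) is the coefficient of the edge x^i y^j X, i.e. the coefficient of
  x^i y^j in P_alpha.\<close>
fun chainX :: "int \<times> int \<Rightarrow> letter list \<Rightarrow> int \<times> int \<Rightarrow> int" where
  "chainX p [] = (\<lambda>_. 0)"
| "chainX (i, j) ((GX, True) # w) =
     (\<lambda>e. chainX (i + 1, j) w e + (if e = (i, j) then 1 else 0))"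
| "chainX (i, j) ((GX, False) # w) =
     (\<lambda>e. chainX (i - 1, j) w e - (if e = (i - 1, j) then 1 else 0))"
| "chainX (i, j) ((GY, True) # w) = chainX (i, j + 1) w"
| "chainX (i, j) ((GY, False) # w) = chainX (i, j - 1) w"

text \<open>The chain of a word is supported in the box [-n,n]^2, n = length; so
  f_alpha(t) = P_alpha(1,t) is the following finite sum (a Laurent polynomial in t).\<close>
definition f_alpha :: "letter list \<Rightarrow> real \<Rightarrow> real" where
  "f_alpha w t = (\<Sum>e \<in> {-int (length w)..int (length w)} \<times> {-int (length w)..int (length w)}.
      real_of_int (chainX (0, 0) w e) * t powi (snd e))"

definition phi :: "letter list \<Rightarrow> real" where
  "phi g = deriv (f_alpha g) 1"

end

theory Submission
  imports Defs
begin


lemma inv_letter_inv[simp]: "inv_letter (inv_letter l) = l"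
  by (simp add: inv_letter_def)

lemma inv_letter_neq[simp]: "inv_letter l \<noteq> l" "l \<noteq> inv_letter l"
  by (auto simp add: inv_letter_def prod_eq_iff)

lemma reduced_tl: "reduced (m # w) \<Longrightarrow> reduced w"
  by (cases w) auto

lemma reduced_push: "reduced w \<Longrightarrow> reduced (push l w)"
  by (cases w) (auto dest: reduced_tl)

lemma reduced_foldr: "reduced c \<Longrightarrow> reduced (foldr push u c)"
  by (induction u) (auto intro: reduced_push)

lemma reduced_red: "reduced (red w)"
  unfolding red_def by (rule reduced_foldr) simp

lemma push_cancel: "reduced w \<Longrightarrow> push l (push (inv_letter l) w) = w"
proof (cases w)
  case (Cons m w')
  assume r: "reduced w"
  show ?thesis
  proof (cases "m = l")
    case True
    have "push l w' = l # w'" using r Cons True by (cases w') auto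
    then show ?thesis using Cons True by simp
  next
    case False
    then show ?thesis using Cons by auto
  qed
qed simp

lemma push_cancel': "reduced w \<Longrightarrow> push (inv_letter l) (push l w) = w"
  using push_cancel[of w "inv_letter l"] by simp

lemma red_Cons: "red (l # w) = push l (red w)"
  by (simp add: red_def)

lemma red_Nil[simp]: "red [] = []"
  by (simp add: red_def)

lemma push_reduced: "reduced (l # w) \<Longrightarrow> push l w = l # w"
  by (cases w) auto

lemma red_reduced: "reduced w \<Longrightarrow> red w = w"
proof (induction w)
  case (Cons l w)
  then show ?case using reduced_tl[OF Cons.prems] push_reduced[OF Cons.prems]
    by (simp add: red_Cons)
qed simp

lemma red_append: "red (u @ v) = foldr push u (red v)"
  by (simp add: red_def)

lemma foldr_push_push: "reduced r \<Longrightarrow> reduced c \<Longrightarrow>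
   foldr push (push l r) c = push l (foldr push r c)"
proof (cases r)
  case (Cons m r')
  assume rr: "reduced r" and rc: "reduced c"
  show ?thesis
  proof (cases "m = inv_letter l")
    case True
    have "push l (push m (foldr push r' c)) = foldr push r' c"
      using True push_cancel[OF reduced_foldr[OF rc]] by simp
    then show ?thesis using Cons True by simp
  qed (use Cons in auto)
qed simp

lemma foldr_push_red: "reduced c \<Longrightarrow> foldr push (red u) c = foldr push u c"
proof (induction u)
  case (Cons l u)
  then show ?case
    by (simp add: red_Cons foldr_push_push reduced_red)
qed simp

lemma red_red_left: "red (red u @ v) = red (u @ v)"
  by (simp add: red_append foldr_push_red reduced_red)

lemma red_red_right: "red (u @ red v) = red (u @ v)"
  by (simp add: red_append red_reduced reduced_red)

definition winv :: "letter list \<Rightarrow> letter list" where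
  "winv w = rev (map inv_letter w)"

lemma red_winv_left: "red (winv u @ u) = []"
proof (induction u)
  case (Cons l u)
  have "red (winv (l # u) @ l # u) = red (winv u @ [inv_letter l, l] @ u)"
    by (simp add: winv_def)
  also have "\<dots> = foldr push (winv u) (push (inv_letter l) (push l (red u)))"
    by (simp add: red_append red_Cons)
  also have "\<dots> = foldr push (winv u) (red u)"
    by (simp add: push_cancel' reduced_red)
  also have "\<dots> = []" using Cons by (simp add: red_append)
  finally show ?case .
qed (simp add: winv_def)

lemma winv_winv[simp]: "winv (winv u) = u"
  by (simp add: winv_def rev_map comp_def)

lemma red_winv_right: "red (u @ winv u) = []"
  using red_winv_left[of "winv u"] by simp

lemma carrier_F2: "carrier F2 = {w. reduced w}" and mult_F2: "x \<otimes>\<^bsub>F2\<^esub> y = red (x @ y)"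
  and one_F2: "\<one>\<^bsub>F2\<^esub> = []"
  by (simp_all add: F2_def)

lemma group_F2: "group F2"
proof (rule groupI)
  fix x y z assume x: "x \<in> carrier F2" and y: "y \<in> carrier F2" and z: "z \<in> carrier F2"
  show "x \<otimes>\<^bsub>F2\<^esub> y \<in> carrier F2" by (simp add: carrier_F2 mult_F2 reduced_red)
  show "x \<otimes>\<^bsub>F2\<^esub> y \<otimes>\<^bsub>F2\<^esub> z = x \<otimes>\<^bsub>F2\<^esub> (y \<otimes>\<^bsub>F2\<^esub> z)"
    by (simp add: mult_F2 red_red_left red_red_right)
next
  show "\<one>\<^bsub>F2\<^esub> \<in> carrier F2" by (simp add: carrier_F2 one_F2)
next
  fix x assume x: "x \<in> carrier F2"
  then show "\<one>\<^bsub>F2\<^esub> \<otimes>\<^bsub>F2\<^esub> x = x" by (simp add: carrier_F2 one_F2 mult_F2 red_reduced)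
  show "\<exists>y\<in>carrier F2. y \<otimes>\<^bsub>F2\<^esub> x = \<one>\<^bsub>F2\<^esub>"
    by (rule bexI[of _ "red (winv x)"]) (simp_all add: carrier_F2 one_F2 mult_F2 reduced_red red_red_left red_winv_left)
qed

lemma inv_F2: "x \<in> carrier F2 \<Longrightarrow> inv\<^bsub>F2\<^esub> x = red (winv x)"
  by (rule group.inv_equality[OF group_F2]) (simp_all add: carrier_F2 one_F2 mult_F2 reduced_red red_red_left red_winv_left)


primrec ex :: "letter list \<Rightarrow> int" where
  "ex [] = 0"
| "ex (l # w) = (if l = (GX, True) then ex w + 1 else if l = (GX, False) then ex w - 1 else ex w)"

primrec ey :: "letter list \<Rightarrow> int" where
  "ey [] = 0"
| "ey (l # w) = (if l = (GY, True) then ey w + 1 else if l = (GY, False) then ey w - 1 else ey w)"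

primrec D :: "int \<Rightarrow> letter list \<Rightarrow> int" where
  "D j [] = 0"
| "D j (l # w) = (if l = (GX, True) then D j w + j else if l = (GX, False) then D j w - j
     else if l = (GY, True) then D (j + 1) w else D (j - 1) w)"

declare ex.simps(2)[simp del] ey.simps(2)[simp del] D.simps(2)[simp del]

lemma ex_simps[simp]: "ex ((GX, True) # w) = ex w + 1" "ex ((GX, False) # w) = ex w - 1"
  "ex ((GY, b) # w) = ex w"
  by (simp_all add: ex.simps(2))
lemma ey_simps[simp]: "ey ((GY, True) # w) = ey w + 1" "ey ((GY, False) # w) = ey w - 1"
  "ey ((GX, b) # w) = ey w"
  by (simp_all add: ey.simps(2))
lemma D_simps[simp]: "D j ((GX, True) # w) = D j w + j" "D j ((GX, False) # w) = D j w - j"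
  "D j ((GY, True) # w) = D (j + 1) w" "D j ((GY, False) # w) = D (j - 1) w"
  by (simp_all add: D.simps(2))

lemma letter_cases: obtains "l = (GX, True)" | "l = (GX, False)" | "l = (GY, True)" | "l = (GY, False)"
proof (cases l)
  case (Pair g b)
  then show ?thesis using that by (cases g; cases b) auto
qed

lemma inv_letter_simps[simp]: "inv_letter (GX, True) = (GX, False)" "inv_letter (GX, False) = (GX, True)"
  "inv_letter (GY, True) = (GY, False)" "inv_letter (GY, False) = (GY, True)"
  by (simp_all add: inv_letter_def)

lemma ex_cancel: "ex (l # inv_letter l # w) = ex w"
  by (cases l rule: letter_cases) auto
lemma ey_cancel: "ey (l # inv_letter l # w) = ey w"
  by (cases l rule: letter_cases) auto
lemma D_cancel: "D j (l # inv_letter l # w) = D j w"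
  by (cases l rule: letter_cases) auto

lemma ex_push: "ex (push l w) = ex (l # w)"
  by (cases w) (auto simp: ex_cancel)
lemma ey_push: "ey (push l w) = ey (l # w)"
  by (cases w) (auto simp: ey_cancel)
lemma D_push: "D j (push l w) = D j (l # w)"
  by (cases w) (auto simp: D_cancel)

lemma ex_Cons_eq: "ex u = ex v \<Longrightarrow> ex (l # u) = ex (l # v)"
  by (cases l rule: letter_cases) auto
lemma ey_Cons_eq: "ey u = ey v \<Longrightarrow> ey (l # u) = ey (l # v)"
  by (cases l rule: letter_cases) auto
lemma D_Cons_eq: "(\<And>j. D j u = D j v) \<Longrightarrow> D j (l # u) = D j (l # v)"
  by (cases l rule: letter_cases) auto

lemma ex_red: "ex (red w) = ex w"
  by (induction w) (auto simp: red_Cons ex_push intro: ex_Cons_eq)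
lemma ey_red: "ey (red w) = ey w"
  by (induction w) (auto simp: red_Cons ey_push intro: ey_Cons_eq)
lemma D_red: "D j (red w) = D j w"
  by (induction w arbitrary: j) (auto simp: red_Cons D_push intro: D_Cons_eq)

lemma ex_append[simp]: "ex (u @ v) = ex u + ex v"
proof (induction u)
  case (Cons l u) then show ?case by (cases l rule: letter_cases) auto
qed simp
lemma ey_append[simp]: "ey (u @ v) = ey u + ey v"
proof (induction u)
  case (Cons l u) then show ?case by (cases l rule: letter_cases) auto
qed simp
lemma D_append: "D j (u @ v) = D j u + D (j + ey u) v"
proof (induction u arbitrary: j)
  case (Cons l u)
  then show ?case using Cons.IH[of "j + 1"] Cons.IH[of "j - 1"] Cons.IH[of j]
    by (cases l rule: letter_cases) (simp_all add: algebra_simps)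
qed simp
lemma D_shift: "D (j + k) w = D j w + k * ex w"
proof (induction w arbitrary: j)
  case (Cons l w)
  then show ?case using Cons.IH[of "j + 1"] Cons.IH[of "j - 1"] Cons.IH[of j]
    by (cases l rule: letter_cases) (simp_all add: algebra_simps)
qed simp

lemma ex_winv[simp]: "ex (winv w) = - ex w"
proof (induction w)
  case (Cons l w) then show ?case by (cases l rule: letter_cases) (auto simp: winv_def)
qed (simp add: winv_def)
lemma ey_winv[simp]: "ey (winv w) = - ey w"
proof (induction w)
  case (Cons l w) then show ?case by (cases l rule: letter_cases) (auto simp: winv_def)
qed (simp add: winv_def)

definition sqbox :: "int \<times> int \<Rightarrow> nat \<Rightarrow> (int \<times> int) set" where
  "sqbox p n = {fst p - int n..fst p + int n} \<times> {snd p - int n..snd p + int n}"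

lemma chain_sum: "finite S \<Longrightarrow> sqbox p (length w) \<subseteq> S \<Longrightarrow>
  (\<Sum>e\<in>S. chainX p w e * snd e) = D (snd p) w"
proof (induction p w rule: chainX.induct)
  case (2 i j w)
  have "sqbox (i + 1, j) (length w) \<subseteq> S" "(i, j) \<in> S"
    using 2(3) by (auto simp: sqbox_def subset_iff)
  have "(\<Sum>e\<in>S. chainX (i, j) ((GX, True) # w) e * snd e) =
     (\<Sum>e\<in>S. chainX (i + 1, j) w e * snd e + (if e = (i, j) then snd e else 0))"
    by (intro sum.cong) (auto simp: distrib_right)
  also have "\<dots> = D j w + j" using 2 \<open>(i, j) \<in> S\<close> \<open>sqbox (i + 1, j) (length w) \<subseteq> S\<close>
    by (simp add: sum.distrib)
  finally show ?case by simp
next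
  case (3 i j w)
  have "sqbox (i - 1, j) (length w) \<subseteq> S" "(i - 1, j) \<in> S"
    using 3(3) by (auto simp: sqbox_def subset_iff)
  have "(\<Sum>e\<in>S. chainX (i, j) ((GX, False) # w) e * snd e) =
     (\<Sum>e\<in>S. chainX (i - 1, j) w e * snd e - (if e = (i - 1, j) then snd e else 0))"
    by (intro sum.cong) (auto simp: left_diff_distrib)
  also have "\<dots> = D j w - j" using 3 \<open>(i - 1, j) \<in> S\<close> \<open>sqbox (i - 1, j) (length w) \<subseteq> S\<close>
    by (simp add: sum_subtractf)
  finally show ?case by simp
next
  case (4 i j w)
  have "sqbox (i, j + 1) (length w) \<subseteq> S"
    using 4(3) by (auto simp: sqbox_def subset_iff)
  then show ?case using 4 by simp
next
  case (5 i j w)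
  have "sqbox (i, j - 1) (length w) \<subseteq> S"
    using 5(3) by (auto simp: sqbox_def subset_iff)
  then show ?case using 5 by simp
qed simp

lemma phi_D: "phi w = of_int (D 0 w)"
proof -
  let ?B = "{-int (length w)..int (length w)} \<times> {-int (length w)..int (length w)}"
  have B: "?B = sqbox (0,0) (length w)" by (simp add: sqbox_def)
  have "(f_alpha w has_real_derivative (\<Sum>e\<in>?B. real_of_int (chainX (0, 0) w e) * (of_int (snd e) * 1 powi (snd e - 1) * 1))) (at 1)"
    unfolding f_alpha_def
    by (intro DERIV_sum DERIV_cmult DERIV_power_int DERIV_ident) simp
  then have "phi w = (\<Sum>e\<in>?B. real_of_int (chainX (0, 0) w e) * (of_int (snd e) * 1 powi (snd e - 1) * 1))"
    unfolding phi_def by (rule DERIV_imp_deriv)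
  also have "\<dots> = (\<Sum>e\<in>?B. real_of_int (chainX (0, 0) w e * snd e))"
    by (rule sum.cong) (simp_all only: power_int_1_left mult_1_right of_int_mult)
  also have "\<dots> = of_int (\<Sum>e\<in>?B. chainX (0, 0) w e * snd e)"
    by (rule of_int_sum[symmetric])
  also have "(\<Sum>e\<in>?B. chainX (0, 0) w e * snd e) = D 0 w"
  proof -
    have "(\<Sum>e\<in>sqbox (0,0) (length w). chainX (0, 0) w e * snd e) = D (snd (0::int,0::int)) w"
      by (rule chain_sum) (simp_all add: sqbox_def)
    then show ?thesis by (simp only: B snd_conv)
  qed
  finally show ?thesis .
qed


lemma ex_mult: "ex (a \<otimes>\<^bsub>F2\<^esub> b) = ex a + ex b"
  by (simp add: mult_F2 ex_red)
lemma ey_mult: "ey (a \<otimes>\<^bsub>F2\<^esub> b) = ey a + ey b"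
  by (simp add: mult_F2 ey_red)
lemma ex_inv: "a \<in> carrier F2 \<Longrightarrow> ex (inv\<^bsub>F2\<^esub> a) = - ex a"
  by (simp add: inv_F2 ex_red)
lemma ey_inv: "a \<in> carrier F2 \<Longrightarrow> ey (inv\<^bsub>F2\<^esub> a) = - ey a"
  by (simp add: inv_F2 ey_red)

lemma comm_zero: "w \<in> comm_F2 \<Longrightarrow> ex w = 0 \<and> ey w = 0"
proof -
  interpret G: group F2 by (rule group_F2)
  let ?K = "{w \<in> carrier F2. ex w = 0 \<and> ey w = 0}"
  have sg: "subgroup ?K F2"
  proof (rule G.subgroupI)
    show "?K \<noteq> {}" using G.one_closed by (auto simp: one_F2 intro!: exI[of _ "[]"])
  qed (auto simp: ex_mult ey_mult ex_inv ey_inv)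
  have "derived_set F2 (carrier F2) \<subseteq> ?K"
    by (auto simp: ex_mult ey_mult ex_inv ey_inv)
  then have "comm_F2 \<subseteq> ?K"
    unfolding comm_F2_def derived_def using G.generate_subgroup_incl[OF _ sg] by blast
  then show "w \<in> comm_F2 \<Longrightarrow> ex w = 0 \<and> ey w = 0" by blast
qed

lemma comm_char: assumes w: "w \<in> carrier F2" and e: "ex w = 0" "ey w = 0" shows "w \<in> comm_F2"
proof -
  interpret G: group F2 by (rule group_F2)
  interpret Nn: normal comm_F2 F2 unfolding comm_F2_def by (rule G.derived_self_is_normal)
  define Q where "Q = F2 Mod comm_F2"
  interpret Q: comm_group Q unfolding Q_def comm_F2_def by (rule G.derived_quot_is_comm_group)
  define h where "h = (\<lambda>a. comm_F2 #>\<^bsub>F2\<^esub> a)"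
  interpret H: group_hom F2 Q h
    unfolding group_hom_def group_hom_axioms_def Q_def h_def
    using group_F2 Q.is_group Nn.r_coset_hom_Mod by (simp add: Q_def)
  define X where "X = [(GX, True)]"
  define Y where "Y = [(GY, True)]"
  have XY: "X \<in> carrier F2" "Y \<in> carrier F2" by (simp_all add: X_def Y_def carrier_F2)
  have hXY: "h X \<in> carrier Q" "h Y \<in> carrier Q" using XY by simp_all
  have iX: "inv\<^bsub>F2\<^esub> X = [(GX, False)]" using XY by (simp add: inv_F2 X_def winv_def red_Cons)
  have iY: "inv\<^bsub>F2\<^esub> Y = [(GY, False)]" using XY by (simp add: inv_F2 Y_def winv_def red_Cons)
  have main: "reduced v \<Longrightarrow> h v = h X [^]\<^bsub>Q\<^esub> ex v \<otimes>\<^bsub>Q\<^esub> h Y [^]\<^bsub>Q\<^esub> ey v" for v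
  proof (induction v)
    case Nil
    have "h [] = \<one>\<^bsub>Q\<^esub>" using H.hom_one by (simp add: one_F2)
    then show ?case using hXY by simp
  next
    case (Cons l v)
    have rv: "reduced v" using Cons.prems by (rule reduced_tl)
    have vc: "v \<in> carrier F2" using rv by (simp add: carrier_F2)
    have lc: "[l] \<in> carrier F2" by (simp add: carrier_F2)
    have "l # v = [l] \<otimes>\<^bsub>F2\<^esub> v"
      using push_reduced[OF Cons.prems] red_reduced[OF rv] by (simp add: mult_F2 red_Cons)
    then have hv: "h (l # v) = h [l] \<otimes>\<^bsub>Q\<^esub> (h X [^]\<^bsub>Q\<^esub> ex v \<otimes>\<^bsub>Q\<^esub> h Y [^]\<^bsub>Q\<^esub> ey v)"
      using Cons.IH[OF rv] vc lc by simp
    let ?a = "h X [^]\<^bsub>Q\<^esub> ex v" and ?b = "h Y [^]\<^bsub>Q\<^esub> ey v"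
    have ab: "?a \<in> carrier Q" "?b \<in> carrier Q" using hXY by simp_all
    show ?case
    proof (cases l rule: letter_cases)
      case 1
      have "h X [^]\<^bsub>Q\<^esub> (ex v + 1) = ?a \<otimes>\<^bsub>Q\<^esub> h X" using hXY by (simp add: Q.int_pow_mult)
      then show ?thesis using hv 1 hXY ab by (simp add: X_def Q.m_ac)
    next
      case 2
      have "h [l] = inv\<^bsub>Q\<^esub> h X" using 2 iX XY by (metis H.hom_inv)
      moreover have "h X [^]\<^bsub>Q\<^esub> (ex v - 1) = ?a \<otimes>\<^bsub>Q\<^esub> inv\<^bsub>Q\<^esub> h X"
        using hXY Q.int_pow_mult[of "h X" "ex v" "-1"] by (simp add: Q.int_pow_neg)
      ultimately show ?thesis using hv 2 hXY ab by (simp add: Q.m_ac)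
    next
      case 3
      have "h Y [^]\<^bsub>Q\<^esub> (ey v + 1) = ?b \<otimes>\<^bsub>Q\<^esub> h Y" using hXY by (simp add: Q.int_pow_mult)
      then show ?thesis using hv 3 hXY ab by (simp add: Y_def Q.m_ac)
    next
      case 4
      have "h [l] = inv\<^bsub>Q\<^esub> h Y" using 4 iY XY by (metis H.hom_inv)
      moreover have "h Y [^]\<^bsub>Q\<^esub> (ey v - 1) = ?b \<otimes>\<^bsub>Q\<^esub> inv\<^bsub>Q\<^esub> h Y"
        using hXY Q.int_pow_mult[of "h Y" "ey v" "-1"] by (simp add: Q.int_pow_neg)
      ultimately show ?thesis using hv 4 hXY ab by (simp add: Q.m_ac)
    qed
  qed
  have "h w = \<one>\<^bsub>Q\<^esub>" using main[of w] w e hXY by (simp add: carrier_F2)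
  then have "comm_F2 #>\<^bsub>F2\<^esub> w = comm_F2" by (simp add: h_def Q_def)
  then show ?thesis using G.coset_join1 w Nn.subgroup_axioms by blast
qed

lemma D_shift0: "D k w = D 0 w + k * ex w"
  using D_shift[of 0 k w] by simp

theorem lemma3p1:
  fixes g a b :: "letter list"
  assumes "g \<in> comm_F2"
    and "phi g = 0"
    and "a \<in> carrier F2" and "b \<in> carrier F2"
    and "g = a \<otimes>\<^bsub>F2\<^esub> b"
    and "conjugate_F2 a b"
  shows "a \<in> comm_F2 \<and> phi a = 0 \<and> b \<in> comm_F2 \<and> phi b = 0"
proof -
  interpret G: group F2 by (rule group_F2)
  obtain c where c: "c \<in> carrier F2" and bdef: "b = c \<otimes>\<^bsub>F2\<^esub> a \<otimes>\<^bsub>F2\<^esub> inv\<^bsub>F2\<^esub> c"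
    using assms(6) unfolding conjugate_F2_def by blast
  have exb: "ex b = ex a" "ey b = ey a" using bdef c assms(3)
    by (simp_all add: ex_mult ey_mult ex_inv ey_inv)
  have g0: "ex g = 0" "ey g = 0" using comm_zero[OF assms(1)] by simp_all
  have exa: "ex a = 0" "ey a = 0" using g0 exb assms(5) by (simp_all add: ex_mult ey_mult)
  have ac: "a \<in> comm_F2" by (rule comm_char[OF assms(3) exa])
  have bc: "b \<in> comm_F2" using exb exa by (intro comm_char[OF assms(4)]) simp_all
  have b_red: "b = red (c @ a @ winv c)"
    using bdef c by (simp add: mult_F2 inv_F2 red_red_left red_red_right)
  have cc: "D 0 c + D 0 (winv c) - ey c * ex c = 0"
  proof -
    have "D 0 (red (c @ winv c)) = 0" by (simp add: red_winv_right)
    then show ?thesis by (simp add: D_red D_append D_shift0[of "ey c" "winv c"])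
  qed
  have Db: "D 0 b = D 0 a"
    using cc exa b_red
    by (simp add: D_red D_append D_shift0[of "ey c" a] D_shift0[of "ey c" "winv c"] algebra_simps)
  have "D 0 g = D 0 a + D (ey a) b"
    using assms(5) by (simp add: mult_F2 D_red D_append)
  then have Dg: "D 0 g = D 0 a + D 0 b"
    using exa by simp
  have "D 0 g = 0" using assms(2) by (simp add: phi_D)
  then have "D 0 a = 0" "D 0 b = 0" using Dg Db by simp_all
  then show ?thesis using ac bc by (simp add: phi_D)
qed

end
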